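(* Let $\mathbb X=\langle X,\rho\rangle$ be the Rado graph (countable random graph; $\rho$ symmetric irreflexive), let $x,y\in X$ with $\langle x,y\rangle\in\rho$, and let $\mathbb Y=\langle X,\sigma\rangle$ where $\sigma=\rho\setminus\{\langle x,y\rangle\}$. Then $\mathbb X\sim_c\mathbb Y$ and $\mathbb X\not\equiv\mathbb Y$.
   Context: The language has one binary relation symbol. A condensation from $\langle X,\rho\rangle$ onto $\langle Y,\sigma\rangle$ is a bijection $F:X\to Y$ with $\langle a,b\rangle\in\rho\Rightarrow\langle F(a),F(b)\rangle\in\sigma$; $\mathbb X\sim_c\mathbb Y$ means condensations exist in both directions. $\equiv$ denotes first order elementary equivalence. *)

theory Defs
  imports Main "HOL-Library.Countable_Set"
begin

definition condensation :: "('a \<Rightarrow> 'b) \<Rightarrow> 'a set \<Rightarrow> ('a \<times> 'a) set \<Rightarrow> 'b set \<Rightarrow> ('b \<times> 'b) set \<Rightarrow> bool" where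
  "condensation F X \<rho> Y \<sigma> \<longleftrightarrow> bij_betw F X Y \<and> (\<forall>a b. (a, b) \<in> \<rho> \<longrightarrow> (F a, F b) \<in> \<sigma>)"

definition cond_equiv :: "'a set \<Rightarrow> ('a \<times> 'a) set \<Rightarrow> 'b set \<Rightarrow> ('b \<times> 'b) set \<Rightarrow> bool" where
  "cond_equiv X \<rho> Y \<sigma> \<longleftrightarrow> (\<exists>F. condensation F X \<rho> Y \<sigma>) \<and> (\<exists>G. condensation G Y \<sigma> X \<rho>)"

datatype fm = FEq nat nat | FRel nat nat | FNeg fm | FConj fm fm | FEx nat fm

fun fv :: "fm \<Rightarrow> nat set" where
  "fv (FEq i j) = {i, j}"
| "fv (FRel i j) = {i, j}"
| "fv (FNeg \<phi>) = fv \<phi>"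
| "fv (FConj \<phi> \<psi>) = fv \<phi> \<union> fv \<psi>"
| "fv (FEx i \<phi>) = fv \<phi> - {i}"

fun sat :: "'a set \<Rightarrow> ('a \<times> 'a) set \<Rightarrow> fm \<Rightarrow> (nat \<Rightarrow> 'a) \<Rightarrow> bool" where
  "sat X R (FEq i j) e \<longleftrightarrow> e i = e j"
| "sat X R (FRel i j) e \<longleftrightarrow> (e i, e j) \<in> R"
| "sat X R (FNeg \<phi>) e \<longleftrightarrow> \<not> sat X R \<phi> e"
| "sat X R (FConj \<phi> \<psi>) e \<longleftrightarrow> sat X R \<phi> e \<and> sat X R \<psi> e"
| "sat X R (FEx i \<phi>) e \<longleftrightarrow> (\<exists>a\<in>X. sat X R \<phi> (e(i := a)))"

text \<open>A sentence holds in a structure (for sentences the assignment is irrelevant).\<close>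
definition models :: "'a set \<Rightarrow> ('a \<times> 'a) set \<Rightarrow> fm \<Rightarrow> bool" where
  "models X R \<phi> \<longleftrightarrow> (\<forall>e. sat X R \<phi> e)"

definition elem_equiv :: "'a set \<Rightarrow> ('a \<times> 'a) set \<Rightarrow> 'b set \<Rightarrow> ('b \<times> 'b) set \<Rightarrow> bool" where
  "elem_equiv X \<rho> Y \<sigma> \<longleftrightarrow> (\<forall>\<phi>. fv \<phi> = {} \<longrightarrow> (models X \<rho> \<phi> \<longleftrightarrow> models Y \<sigma> \<phi>))"

text \<open>The Rado graph: a countable graph (symmetric, irreflexive) with the extension property;
  it is unique up to isomorphism.\<close>
definition rado_graph :: "'a set \<Rightarrow> ('a \<times> 'a) set \<Rightarrow> bool" where
  "rado_graph X \<rho> \<longleftrightarrow> countable X \<and> \<rho> \<subseteq> X \<times> X \<and> sym \<rho> \<and> (\<forall>a. (a, a) \<notin> \<rho>) \<and>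
     (\<forall>U V. finite U \<and> finite V \<and> U \<subseteq> X \<and> V \<subseteq> X \<and> U \<inter> V = {} \<longrightarrow>
        (\<exists>z\<in>X - (U \<union> V). (\<forall>u\<in>U. (z, u) \<in> \<rho>) \<and> (\<forall>v\<in>V. (z, v) \<notin> \<rho>)))"

end

theory Submission
  imports Defs
begin

definition good :: "'a set \<Rightarrow> ('a \<times> 'a) set \<Rightarrow> ('a \<times> 'a) set \<Rightarrow> bool" where
  "good X R P \<longleftrightarrow> finite P \<and> P \<subseteq> X \<times> X \<and>
     (\<forall>a b b'. (a,b) \<in> P \<longrightarrow> (a,b') \<in> P \<longrightarrow> b = b') \<and>
     (\<forall>a a' b. (a,b) \<in> P \<longrightarrow> (a',b) \<in> P \<longrightarrow> a = a') \<and>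
     (\<forall>a b a' b'. (a,b) \<in> P \<longrightarrow> (a',b') \<in> P \<longrightarrow> (a,a') \<in> R \<longrightarrow> (b,b') \<in> R)"

definition forth :: "'a set \<Rightarrow> ('a \<times> 'a) set \<Rightarrow> 'a \<Rightarrow> ('a \<times> 'a) set \<Rightarrow> ('a \<times> 'a) set" where
  "forth X R a P = (if a \<in> Domain P then P else insert (a, SOME b. good X R (insert (a,b) P)) P)"

definition bkstep :: "'a set \<Rightarrow> ('a \<times> 'a) set \<Rightarrow> 'a \<Rightarrow> ('a \<times> 'a) set \<Rightarrow> ('a \<times> 'a) set" where
  "bkstep X R b P = (if b \<in> Range P then P else insert (SOME a. good X R (insert (a,b) P), b) P)"

lemma rado_ext:
  assumes "rado_graph X R" "finite U" "finite V" "U \<subseteq> X" "V \<subseteq> X" "U \<inter> V = {}"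
  shows "\<exists>z\<in>X - (U \<union> V). (\<forall>u\<in>U. (z, u) \<in> R) \<and> (\<forall>v\<in>V. (z, v) \<notin> R)"
  using assms unfolding rado_graph_def by blast

lemma forth_ex:
  assumes r: "rado_graph X R" and g: "good X R P" and a: "a \<in> X" "a \<notin> Domain P"
  shows "\<exists>b. good X R (insert (a,b) P)"
proof -
  have sym: "sym R" and irr: "\<And>c. (c,c) \<notin> R" and RX: "R \<subseteq> X \<times> X"
    using r unfolding rado_graph_def by auto
  have fP: "finite P" and PX: "P \<subseteq> X \<times> X"
    and fnc: "\<And>a b b'. (a,b) \<in> P \<Longrightarrow> (a,b') \<in> P \<Longrightarrow> b = b'"
    and inj: "\<And>a a' b. (a,b) \<in> P \<Longrightarrow> (a',b) \<in> P \<Longrightarrow> a = a'"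
    and hom: "\<And>a b a' b'. (a,b) \<in> P \<Longrightarrow> (a',b') \<in> P \<Longrightarrow> (a,a') \<in> R \<Longrightarrow> (b,b') \<in> R"
    using g unfolding good_def by blast+
  define U where "U = {b. \<exists>u. (u,b) \<in> P \<and> (a,u) \<in> R}"
  define V where "V = Range P - U"
  have UR: "U \<subseteq> Range P" unfolding U_def by auto
  have fR: "finite (Range P)" using fP by (simp add: finite_Range)
  have "finite U" using UR fR finite_subset by blast
  then have fU: "finite U" .
  have fV: "finite V" using fR V_def by simp
  have UX: "U \<subseteq> X" and VX: "V \<subseteq> X" using UR PX V_def by auto
  have UV: "U \<inter> V = {}" using V_def by auto
  obtain z where z: "z \<in> X" "z \<notin> U \<union> V" "\<forall>u\<in>U. (z, u) \<in> R"
    using rado_ext[OF r fU fV UX VX UV] by auto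
  have zR: "z \<notin> Range P" using z(2) UR V_def by auto
  have "good X R (insert (a,z) P)"
    unfolding good_def
  proof (intro conjI allI impI)
    show "finite (insert (a, z) P)" using fP by simp
    show "insert (a, z) P \<subseteq> X \<times> X" using PX a z by auto
  next
    fix c b b' assume "(c,b) \<in> insert (a,z) P" "(c,b') \<in> insert (a,z) P"
    then show "b = b'" using fnc a(2) by blast
  next
    fix c c' b assume "(c,b) \<in> insert (a,z) P" "(c',b) \<in> insert (a,z) P"
    then show "c = c'" using inj zR by blast
  next
    fix c b c' b' assume h: "(c,b) \<in> insert (a,z) P" "(c',b') \<in> insert (a,z) P" "(c,c') \<in> R"
    show "(b,b') \<in> R"
    proof (cases "(c,b) = (a,z)")
      case True
      show ?thesis
      proof (cases "(c',b') = (a,z)")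
        case True with \<open>(c,b) = (a,z)\<close> h(3) irr show ?thesis by auto
      next
        case False
        then have "(c',b') \<in> P" using h(2) by auto
        moreover have "(a,c') \<in> R" using True h(3) by auto
        ultimately have "b' \<in> U" unfolding U_def by auto
        then show ?thesis using z(3) True by auto
      qed
    next
      case False
      then have cb: "(c,b) \<in> P" using h(1) by auto
      show ?thesis
      proof (cases "(c',b') = (a,z)")
        case True
        have "(a,c) \<in> R" using True h(3) sym by (auto dest: symD)
        then have "b \<in> U" using cb unfolding U_def by auto
        then have "(z,b) \<in> R" using z(3) by auto
        then show ?thesis using True sym by (auto dest: symD)
      next
        case False
        then show ?thesis using h(3) hom[OF cb] False h(2) by blast
      qed
    qed
  qed
  then show ?thesis by blast
qed

lemma bk_ex:
  assumes r: "rado_graph X R" and g: "good X R P" and b: "b \<in> X" "b \<notin> Range P"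
  shows "\<exists>a. good X R (insert (a,b) P)"
proof -
  have sym: "sym R" and irr: "\<And>c. (c,c) \<notin> R" and RX: "R \<subseteq> X \<times> X"
    using r unfolding rado_graph_def by auto
  have fP: "finite P" and PX: "P \<subseteq> X \<times> X"
    and fnc: "\<And>a b b'. (a,b) \<in> P \<Longrightarrow> (a,b') \<in> P \<Longrightarrow> b = b'"
    and inj: "\<And>a a' b. (a,b) \<in> P \<Longrightarrow> (a',b) \<in> P \<Longrightarrow> a = a'"
    and hom: "\<And>a b a' b'. (a,b) \<in> P \<Longrightarrow> (a',b') \<in> P \<Longrightarrow> (a,a') \<in> R \<Longrightarrow> (b,b') \<in> R"
    using g unfolding good_def by blast+
  have fD: "finite (Domain P)" using fP by (simp add: finite_Domain)
  have DX: "Domain P \<subseteq> X" using PX by auto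
  have e1: "{} \<inter> Domain P = {}" by simp
  obtain z where z: "z \<in> X" "z \<notin> Domain P" "\<forall>v\<in>Domain P. (z, v) \<notin> R"
    using rado_ext[OF r finite.emptyI fD empty_subsetI DX e1] by auto
  have "good X R (insert (z,b) P)"
    unfolding good_def
  proof (intro conjI allI impI)
    show "finite (insert (z,b) P)" using fP by simp
    show "insert (z,b) P \<subseteq> X \<times> X" using PX b z by auto
  next
    fix c d d' assume "(c,d) \<in> insert (z,b) P" "(c,d') \<in> insert (z,b) P"
    then show "d = d'" using fnc z(2) by blast
  next
    fix c c' d assume "(c,d) \<in> insert (z,b) P" "(c',d) \<in> insert (z,b) P"
    then show "c = c'" using inj b(2) by blast
  next
    fix c d c' d' assume h: "(c,d) \<in> insert (z,b) P" "(c',d') \<in> insert (z,b) P" "(c,c') \<in> R"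
    show "(d,d') \<in> R"
    proof (cases "(c,d) = (z,b)")
      case True
      then show ?thesis
      proof (cases "(c',d') = (z,b)")
        case True with \<open>(c,d) = (z,b)\<close> h(3) irr show ?thesis by auto
      next
        case False
        then have "c' \<in> Domain P" using h(2) by auto
        then show ?thesis using z(3) True h(3) by auto
      qed
    next
      case False
      then have cd: "(c,d) \<in> P" using h(1) by auto
      show ?thesis
      proof (cases "(c',d') = (z,b)")
        case True
        have "(z,c) \<in> R" using True h(3) sym by (auto dest: symD)
        then show ?thesis using z(3) cd by auto
      next
        case False
        then show ?thesis using h(3) hom[OF cd] False h(2) by blast
      qed
    qed
  qed
  then show ?thesis by blast
qed

lemma forth_good:
  assumes "rado_graph X R" "good X R P" "a \<in> X"
  shows "good X R (forth X R a P) \<and> P \<subseteq> forth X R a P \<and> a \<in> Domain (forth X R a P)"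
proof (cases "a \<in> Domain P")
  case True then show ?thesis using assms(2) unfolding forth_def by simp
next
  case False
  have "good X R (insert (a, SOME b. good X R (insert (a,b) P)) P)"
    using someI_ex[OF forth_ex[OF assms False]] .
  then show ?thesis using False unfolding forth_def by auto
qed

lemma bk_good:
  assumes "rado_graph X R" "good X R P" "b \<in> X"
  shows "good X R (bkstep X R b P) \<and> P \<subseteq> bkstep X R b P \<and> b \<in> Range (bkstep X R b P)"
proof (cases "b \<in> Range P")
  case True then show ?thesis using assms(2) unfolding bkstep_def by simp
next
  case False
  have "good X R (insert (SOME a. good X R (insert (a,b) P), b) P)"
    using someI_ex[OF bk_ex[OF assms False]] .
  then show ?thesis using False unfolding bkstep_def by auto
qed

theorem mainTheorem13:
  fixes X :: "'a set" and \<rho> :: "('a \<times> 'a) set" and x y :: 'a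
  assumes "rado_graph X \<rho>"
    and "x \<in> X" and "y \<in> X" and "(x, y) \<in> \<rho>"
  shows "cond_equiv X \<rho> X (\<rho> - {(x, y)}) \<and> \<not> elem_equiv X \<rho> X (\<rho> - {(x, y)})"
proof -
  note r = assms(1)
  have sym: "sym \<rho>" and irr: "\<And>c. (c,c) \<notin> \<rho>" and RX: "\<rho> \<subseteq> X \<times> X" and cX: "countable X"
    using r unfolding rado_graph_def by auto
  have xy: "x \<noteq> y" using irr assms(4) by auto
  have yx: "(y,x) \<in> \<rho>" using sym assms(4) by (auto dest: symD)
  obtain z where z: "z \<in> X" "z \<noteq> x" "(z,x) \<notin> \<rho>"
    using rado_ext[OF r finite.emptyI finite_insert[THEN iffD2, OF finite.emptyI] empty_subsetI _ Int_empty_left, of x] assms(2) by auto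
  have zx: "(x,z) \<notin> \<rho>" using z(3) sym by (auto dest: symD)
  define P0 where "P0 = {(x,x),(z,y)}"
  have g0: "good X \<rho> P0" unfolding good_def P0_def
    using z zx irr xy assms(2,3) by auto
  define e where "e = from_nat_into X"
  have rng: "range e = X" unfolding e_def using range_from_nat_into[OF _ cX] assms(2) by blast
  have eX: "e n \<in> X" for n using rng by auto
  define S where "S = rec_nat P0 (\<lambda>n P. bkstep X \<rho> (e n) (forth X \<rho> (e n) P))"
  have S0: "S 0 = P0" and SS: "S (Suc n) = bkstep X \<rho> (e n) (forth X \<rho> (e n) (S n))" for n
    unfolding S_def by simp_all
  have gS: "good X \<rho> (S n) \<and> S n \<subseteq> S (Suc n) \<and> e n \<in> Domain (S (Suc n)) \<and> e n \<in> Range (S (Suc n))" for n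
  proof (induction n)
    case 0
    have f: "good X \<rho> (forth X \<rho> (e 0) (S 0)) \<and> S 0 \<subseteq> forth X \<rho> (e 0) (S 0) \<and> e 0 \<in> Domain (forth X \<rho> (e 0) (S 0))"
      using forth_good[OF r _ eX] g0 S0 by simp
    then show ?case using bk_good[OF r _ eX, of "forth X \<rho> (e 0) (S 0)" 0] g0 S0 SS[of 0] by blast
  next
    case (Suc n)
    then have gn: "good X \<rho> (S (Suc n))"
      using bk_good[OF r _ eX] forth_good[OF r _ eX] SS by metis
    have f: "good X \<rho> (forth X \<rho> (e (Suc n)) (S (Suc n))) \<and> S (Suc n) \<subseteq> forth X \<rho> (e (Suc n)) (S (Suc n)) \<and> e (Suc n) \<in> Domain (forth X \<rho> (e (Suc n)) (S (Suc n)))"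
      using forth_good[OF r gn eX] by simp
    then show ?case using bk_good[OF r _ eX, of "forth X \<rho> (e (Suc n)) (S (Suc n))" "Suc n"] gn SS[of "Suc n"] by blast
  qed
  have mono: "m \<le> n \<Longrightarrow> S m \<subseteq> S n" for m n
    using lift_Suc_mono_le[of S] gS by blast
  define R where "R = (\<Union>n. S n)"
  have common: "(a,b) \<in> R \<Longrightarrow> (c,d) \<in> R \<Longrightarrow> \<exists>n. (a,b) \<in> S n \<and> (c,d) \<in> S n" for a b c d
  proof -
    assume "(a,b) \<in> R" "(c,d) \<in> R"
    then obtain m n where "(a,b) \<in> S m" "(c,d) \<in> S n" unfolding R_def by auto
    then show ?thesis using mono[of m "max m n"] mono[of n "max m n"] by auto
  qed
  have gd: "good X \<rho> (S n)" for n using gS by blast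
  have Rfun: "(a,b) \<in> R \<Longrightarrow> (a,b') \<in> R \<Longrightarrow> b = b'" for a b b'
    using common[of a b a b'] gd unfolding good_def by blast
  have Rinj: "(a,b) \<in> R \<Longrightarrow> (a',b) \<in> R \<Longrightarrow> a = a'" for a a' b
    using common[of a b a' b] gd unfolding good_def by blast
  have Rhom: "(a,b) \<in> R \<Longrightarrow> (a',b') \<in> R \<Longrightarrow> (a,a') \<in> \<rho> \<Longrightarrow> (b,b') \<in> \<rho>" for a b a' b'
    using common[of a b a' b'] gd unfolding good_def by blast
  have RXX: "R \<subseteq> X \<times> X" using gd unfolding R_def good_def by blast
  have RD: "a \<in> X \<Longrightarrow> a \<in> Domain R" for a
  proof -
    assume "a \<in> X" then obtain n where "a = e n" using rng by auto
    then show ?thesis using gS[of n] unfolding R_def by auto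
  qed
  have RR: "b \<in> X \<Longrightarrow> b \<in> Range R" for b
  proof -
    assume "b \<in> X" then obtain n where "b = e n" using rng by auto
    then show ?thesis using gS[of n] unfolding R_def by auto
  qed
  define F where "F a = (SOME b. (a,b) \<in> R)" for a
  have FR: "a \<in> X \<Longrightarrow> (a, F a) \<in> R" for a
    unfolding F_def using RD[of a] by (auto intro: someI)
  have x0: "(x,x) \<in> R" and z0: "(z,y) \<in> R" using S0 unfolding R_def P0_def by auto
  have bij: "bij_betw F X X"
    unfolding bij_betw_def
  proof
    show "inj_on F X" unfolding inj_on_def using FR Rinj by metis
    show "F ` X = X"
    proof
      show "F ` X \<subseteq> X" using FR RXX by auto
      show "X \<subseteq> F ` X"
      proof
        fix b assume "b \<in> X"
        then obtain a where ab: "(a,b) \<in> R" using RR by auto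
        then have "a \<in> X" using RXX by auto
        then show "b \<in> F ` X" using FR[of a] Rfun ab by (metis image_eqI)
      qed
    qed
  qed
  have c1: "condensation F X \<rho> X (\<rho> - {(x, y)})"
    unfolding condensation_def
  proof (intro conjI allI impI bij)
    fix a b assume ab: "(a,b) \<in> \<rho>"
    then have aX: "a \<in> X" and bX: "b \<in> X" using RX by auto
    have "(F a, F b) \<in> \<rho>" using Rhom[OF FR[OF aX] FR[OF bX] ab] .
    moreover have "(F a, F b) \<noteq> (x, y)"
    proof
      assume "(F a, F b) = (x, y)"
      then have "a = x" "b = z" using Rinj FR[OF aX] FR[OF bX] x0 z0 by auto
      then show False using ab zx by simp
    qed
    ultimately show "(F a, F b) \<in> \<rho> - {(x, y)}" by simp
  qed
  have c2: "condensation id X (\<rho> - {(x, y)}) X \<rho>"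
    unfolding condensation_def by auto
  have ce: "cond_equiv X \<rho> X (\<rho> - {(x, y)})"
    unfolding cond_equiv_def using c1 c2 by blast
  define \<phi> where "\<phi> = FNeg (FEx 0 (FEx 1 (FConj (FRel 0 1) (FNeg (FRel 1 0)))))"
  have fv: "fv \<phi> = {}" unfolding \<phi>_def by auto
  have m1: "models X \<rho> \<phi>" unfolding models_def \<phi>_def using sym by (auto dest: symD)
  have m2: "\<not> models X (\<rho> - {(x, y)}) \<phi>"
    unfolding models_def \<phi>_def using assms(2,3) yx xy by auto
  have "\<not> elem_equiv X \<rho> X (\<rho> - {(x, y)})"
    unfolding elem_equiv_def using fv m1 m2 by blast
  with ce show ?thesis by blast
qed

end
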